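(* Let $(X,\mathcal{U})$ be a sequentially complete separated uniform space, with $\mathcal{F}$ and $\mathcal{V}$ as in the context, and let $\preceq$ be a partial order on $X$ with the property: if a nondecreasing sequence $\{x_n\}$ (i.e. $x_n\preceq x_{n+1}$ for all $n$) converges to some $x\in X$, then it has a subsequence $\{x_{n_k}\}$ with $x_{n_k}\preceq x$ for all $k\ge1$. Let $T:X\to X$ be a nondecreasing order Ćirić-contraction. Then $T$ has a fixed point if and only if there exists $x_0\in X$ with $x_0\preceq Tx_0$. Moreover, this fixed point is unique if (i) the functions $a_2$ and $a_3$ in the contractive condition coincide on $X\times X$; and (ii) each two elements of $X$ have either a lower or an upper bound.
   Context: A uniform space $(X,\mathcal{U})$ is a nonempty set $X$ with a uniformity $\mathcal{U}$ on $X$. For $U,V\subseteq X\times X$, $\Delta(X)=\{(x,x):x\in X\}$ and $U\circ V=\{(x,y):\exists z\in X,\ (x,z)\in V,\ (z,y)\in U\}$. $X$ is separated if $\bigcap\mathcal{U}=\Delta(X)$. A sequence $\{x_n\}$ converges to $x$ if for every $U\in\mathcal{U}$ there is $N$ with $(x_n,x)\in U$ for $n\ge N$; it is Cauchy if for every $U\in\mathcal{U}$ there is $N$ with $(x_m,x_n)\in U$ for $m,n\ge N$; $X$ is sequentially complete if every Cauchy sequence converges. $\mathcal{F}$ is a nonempty collection of (uniformly continuous) pseudometrics on $X$ generating $\mathcal{U}$, and $\mathcal{V}$ is the family of all sets $V=\bigcap_{i=1}^m\{(x,y)\in X\times X:\rho_i(x,y)<r_i\}$ with $m\ge1$, $\rho_i\in\mathcal{F}$,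 $r_i>0$; $\mathcal{V}$ is a base for $\mathcal{U}$. For such $V$ and $\beta>0$, $\beta V=\bigcap_{i=1}^m\{(x,y):\rho_i(x,y)<\beta r_i\}$. A map $T:X\to X$ is a nondecreasing order Ćirić-contraction if (a) $x\preceq y$ implies $Tx\preceq Ty$; and (b) there are positive-valued functions $a_1,a_2,a_3,a_4$ on $X\times X$ with $\sup\{a_1(x,y)+a_2(x,y)+a_3(x,y)+2a_4(x,y):x,y\in X\}<1$ such that for all $x,y\in X$ with $x\preceq y$ and all $V_1,\dots,V_5\in\mathcal{V}$: if $(x,y)\in V_1$, $(x,Tx)\in V_2$, $(y,Ty)\in V_3$, $(x,Ty)\in V_4$, $(y,Tx)\in V_5$, then $(Tx,Ty)\in a_1(x,y)V_1\circ a_2(x,y)V_2\circ a_3(x,y)V_3\circ a_4(x,y)V_4\circ a_4(x,y)V_5$. *)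

theory Defs
  imports Complex_Main
begin

text \<open>The space X is the whole (nonempty) type 'a. A pseudometric on X.\<close>
definition pseudometric :: "('a \<Rightarrow> 'a \<Rightarrow> real) \<Rightarrow> bool" where
  "pseudometric \<rho> \<longleftrightarrow> (\<forall>x. \<rho> x x = 0) \<and> (\<forall>x y. 0 \<le> \<rho> x y) \<and>
     (\<forall>x y. \<rho> x y = \<rho> y x) \<and> (\<forall>x y z. \<rho> x z \<le> \<rho> x y + \<rho> y z)"

text \<open>A member V of the base \<V> is presented by a nonempty finite list of pairs
  (\<rho>_i, r_i) with \<rho>_i in F and r_i > 0.\<close>
definition Vrep :: "('a \<Rightarrow> 'a \<Rightarrow> real) set \<Rightarrow> (('a \<Rightarrow> 'a \<Rightarrow> real) \<times> real) list \<Rightarrow> bool" where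
  "Vrep F rs \<longleftrightarrow> rs \<noteq> [] \<and> (\<forall>(\<rho>, r) \<in> set rs. \<rho> \<in> F \<and> 0 < r)"

definition vset :: "(('a \<Rightarrow> 'a \<Rightarrow> real) \<times> real) list \<Rightarrow> ('a \<times> 'a) set" where
  "vset rs = {(x, y). \<forall>(\<rho>, r) \<in> set rs. \<rho> x y < r}"

definition vscale :: "real \<Rightarrow> (('a \<Rightarrow> 'a \<Rightarrow> real) \<times> real) list \<Rightarrow> (('a \<Rightarrow> 'a \<Rightarrow> real) \<times> real) list" where
  "vscale \<beta> rs = map (\<lambda>(\<rho>, r). (\<rho>, \<beta> * r)) rs"

definition ucomp :: "('a \<times> 'a) set \<Rightarrow> ('a \<times> 'a) set \<Rightarrow> ('a \<times> 'a) set" (infixr "\<circ>\<^sub>U" 75) where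
  "U \<circ>\<^sub>U V = {(x, y). \<exists>z. (x, z) \<in> V \<and> (z, y) \<in> U}"

definition unif :: "('a \<Rightarrow> 'a \<Rightarrow> real) set \<Rightarrow> ('a \<times> 'a) set set" where
  "unif F = {W. \<exists>rs. Vrep F rs \<and> vset rs \<subseteq> W}"

definition separated :: "('a \<Rightarrow> 'a \<Rightarrow> real) set \<Rightarrow> bool" where
  "separated F \<longleftrightarrow> \<Inter> (unif F) = Id"

definition uconv :: "('a \<Rightarrow> 'a \<Rightarrow> real) set \<Rightarrow> (nat \<Rightarrow> 'a) \<Rightarrow> 'a \<Rightarrow> bool" where
  "uconv F s x \<longleftrightarrow> (\<forall>U \<in> unif F. \<exists>N. \<forall>n\<ge>N. (s n, x) \<in> U)"

definition ucauchy :: "('a \<Rightarrow> 'a \<Rightarrow> real) set \<Rightarrow> (nat \<Rightarrow> 'a) \<Rightarrow> bool" where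
  "ucauchy F s \<longleftrightarrow> (\<forall>U \<in> unif F. \<exists>N. \<forall>m\<ge>N. \<forall>n\<ge>N. (s m, s n) \<in> U)"

definition seq_complete :: "('a \<Rightarrow> 'a \<Rightarrow> real) set \<Rightarrow> bool" where
  "seq_complete F \<longleftrightarrow> (\<forall>s. ucauchy F s \<longrightarrow> (\<exists>x. uconv F s x))"

definition ciric_contraction ::
  "('a \<Rightarrow> 'a \<Rightarrow> real) set \<Rightarrow> ('a::order \<Rightarrow> 'a) \<Rightarrow>
   ('a \<Rightarrow> 'a \<Rightarrow> real) \<Rightarrow> ('a \<Rightarrow> 'a \<Rightarrow> real) \<Rightarrow> ('a \<Rightarrow> 'a \<Rightarrow> real) \<Rightarrow> ('a \<Rightarrow> 'a \<Rightarrow> real) \<Rightarrow> bool" where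
  "ciric_contraction F T a1 a2 a3 a4 \<longleftrightarrow>
     (\<forall>x y. x \<le> y \<longrightarrow> T x \<le> T y) \<and>
     (\<forall>x y. 0 < a1 x y \<and> 0 < a2 x y \<and> 0 < a3 x y \<and> 0 < a4 x y) \<and>
     bdd_above (range (\<lambda>(x, y). a1 x y + a2 x y + a3 x y + 2 * a4 x y)) \<and>
     (SUP (x, y). a1 x y + a2 x y + a3 x y + 2 * a4 x y) < 1 \<and>
     (\<forall>x y V1 V2 V3 V4 V5. x \<le> y \<longrightarrow>
        Vrep F V1 \<longrightarrow> Vrep F V2 \<longrightarrow> Vrep F V3 \<longrightarrow> Vrep F V4 \<longrightarrow> Vrep F V5 \<longrightarrow>
        (x, y) \<in> vset V1 \<longrightarrow> (x, T x) \<in> vset V2 \<longrightarrow> (y, T y) \<in> vset V3 \<longrightarrow>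
        (x, T y) \<in> vset V4 \<longrightarrow> (y, T x) \<in> vset V5 \<longrightarrow>
        (T x, T y) \<in> vset (vscale (a1 x y) V1) \<circ>\<^sub>U vset (vscale (a2 x y) V2) \<circ>\<^sub>U
                      vset (vscale (a3 x y) V3) \<circ>\<^sub>U vset (vscale (a4 x y) V4) \<circ>\<^sub>U
                      vset (vscale (a4 x y) V5))"

end

theory Submission
  imports Defs
begin

lemma list_ev:
  assumes "\<forall>p\<in>set rs. \<exists>N. \<forall>n\<ge>N. P p (n::nat)"
  shows "\<exists>N. \<forall>n\<ge>N. \<forall>p\<in>set rs. P p n"
  using assms
proof (induction rs)
  case Nil then show ?case by auto
next
  case (Cons a rs)
  then obtain N1 where N1: "\<forall>n\<ge>N1. P a n" by auto
  from Cons obtain N2 where N2: "\<forall>n\<ge>N2. \<forall>p\<in>set rs. P p n" by auto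
  show ?case by (rule exI[of _ "max N1 N2"]) (use N1 N2 in auto)
qed

lemma Vrep_single: "\<rho> \<in> F \<Longrightarrow> 0 < r \<Longrightarrow> Vrep F [(\<rho>, r)]"
  by (simp add: Vrep_def)

lemma vset_single: "vset [(\<rho>, r)] = {(x,y). \<rho> x y < r}"
  by (simp add: vset_def)

lemma uconv_I:
  assumes "\<forall>\<rho>\<in>F. \<forall>e>0. \<exists>N. \<forall>n\<ge>N. \<rho> (s n) x < e"
  shows "uconv F s x"
  unfolding uconv_def
proof
  fix W assume "W \<in> unif F"
  then obtain rs where rs: "Vrep F rs" "vset rs \<subseteq> W" by (auto simp: unif_def)
  have "\<forall>p\<in>set rs. \<exists>N. \<forall>n\<ge>N. fst p (s n) x < snd p"
    using rs(1) assms by (auto simp: Vrep_def)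
  from list_ev[OF this] obtain N where N: "\<forall>n\<ge>N. \<forall>p\<in>set rs. fst p (s n) x < snd p" by blast
  have "\<forall>n\<ge>N. (s n, x) \<in> vset rs" unfolding vset_def
  proof (clarsimp)
    fix n a b assume "N \<le> n" "(a, b) \<in> set rs"
    then have "fst (a,b) (s n) x < snd (a,b)" using N by blast
    then show "a (s n) x < b" by simp
  qed
  then show "\<exists>N. \<forall>n\<ge>N. (s n, x) \<in> W" using rs(2) by blast
qed

lemma uconv_D:
  assumes "uconv F s x" "\<rho> \<in> F" "pseudometric \<rho>"
  shows "(\<lambda>n. \<rho> (s n) x) \<longlonglongrightarrow> 0"
proof (rule LIMSEQ_I)
  fix r :: real assume r: "0 < r"
  have "vset [(\<rho>, r)] \<in> unif F" using Vrep_single[OF assms(2) r] by (auto simp: unif_def)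
  with assms(1) obtain N where "\<forall>n\<ge>N. (s n, x) \<in> vset [(\<rho>, r)]" by (auto simp: uconv_def)
  moreover have "\<forall>a b. 0 \<le> \<rho> a b" using assms(3) by (simp add: pseudometric_def)
  ultimately show "\<exists>no. \<forall>n\<ge>no. norm (\<rho> (s n) x - 0) < r" by (auto simp: vset_single)
qed

lemma ucauchy_I:
  assumes "\<forall>\<rho>\<in>F. pseudometric \<rho>"
    and "\<forall>\<rho>\<in>F. \<forall>e>0. \<exists>N. \<forall>m\<ge>N. \<forall>n\<ge>m. \<rho> (s m) (s n) < e"
  shows "ucauchy F s"
  unfolding ucauchy_def
proof
  fix W assume "W \<in> unif F"
  then obtain rs where rs: "Vrep F rs" "vset rs \<subseteq> W" by (auto simp: unif_def)
  have "\<forall>p\<in>set rs. \<exists>N. \<forall>m\<ge>N. (\<forall>n\<ge>m. fst p (s m) (s n) < snd p \<and> fst p (s n) (s m) < snd p)"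
  proof
    fix p assume p: "p \<in> set rs"
    then have "fst p \<in> F" "0 < snd p" using rs(1) by (auto simp: Vrep_def)
    then obtain N where N: "\<forall>m\<ge>N. \<forall>n\<ge>m. fst p (s m) (s n) < snd p" using assms(2) by blast
    have sym: "\<forall>a b. fst p a b = fst p b a" using assms(1) \<open>fst p \<in> F\<close> by (simp add: pseudometric_def)
    show "\<exists>N. \<forall>m\<ge>N. (\<forall>n\<ge>m. fst p (s m) (s n) < snd p \<and> fst p (s n) (s m) < snd p)"
    proof (intro exI[of _ N] allI impI conjI)
      fix m n assume "N \<le> m" "m \<le> n"
      then show "fst p (s m) (s n) < snd p" using N by blast
      then show "fst p (s n) (s m) < snd p" using sym by simp
    qed
  qed
  from list_ev[OF this] obtain N where N:
    "\<forall>m\<ge>N. \<forall>p\<in>set rs. \<forall>n\<ge>m. fst p (s m) (s n) < snd p \<and> fst p (s n) (s m) < snd p" by blast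
  have "\<forall>m\<ge>N. \<forall>n\<ge>N. (s m, s n) \<in> vset rs"
  proof (intro allI impI)
    fix m n assume "m \<ge> N" "n \<ge> N"
    show "(s m, s n) \<in> vset rs"
    proof (cases "m \<le> n")
      case True
      have "\<forall>p\<in>set rs. fst p (s m) (s n) < snd p" using N \<open>m\<ge>N\<close> True by blast
      then show ?thesis unfolding vset_def by force
    next
      case False
      have "\<forall>p\<in>set rs. fst p (s m) (s n) < snd p" using N \<open>n\<ge>N\<close> False by auto
      then show ?thesis unfolding vset_def by force
    qed
  qed
  then show "\<exists>N. \<forall>m\<ge>N. \<forall>n\<ge>N. (s m, s n) \<in> W" using rs(2) by blast
qed

lemma sep_eq:
  assumes "separated F" "\<forall>\<rho>\<in>F. \<rho> x y = 0"
  shows "x = y"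
proof -
  have "(x, y) \<in> \<Inter> (unif F)"
  proof
    fix W assume "W \<in> unif F"
    then obtain rs where rs: "Vrep F rs" "vset rs \<subseteq> W" by (auto simp: unif_def)
    have "(x, y) \<in> vset rs" unfolding vset_def
    proof (clarsimp)
      fix a b assume "(a, b) \<in> set rs"
      then have "a \<in> F" "0 < b" using rs(1) by (auto simp: Vrep_def)
      moreover have "a x y = 0" using assms(2) \<open>a \<in> F\<close> by blast
      ultimately show "a x y < b" by simp
    qed
    then show "(x, y) \<in> W" using rs(2) by blast
  qed
  then have "(x, y) \<in> Id" using assms(1) unfolding separated_def by (simp only:)
  then show ?thesis by simp
qed

lemma geo_step:
  fixes d e p q L :: real
  assumes "0 \<le> d" "0 \<le> q" "q < 1" "0 \<le> L" "p + L*q \<le> L" "e \<le> p*d + q*e"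
  shows "e \<le> L*d"
proof -
  have "(1-q)*e \<le> p*d" using assms(6) by (simp add: algebra_simps)
  also have "\<dots> \<le> (L - L*q)*d" using assms by (intro mult_right_mono) auto
  also have "\<dots> = (1-q)*(L*d)" by (simp add: algebra_simps)
  finally show ?thesis using assms(3) by simp
qed

lemma geo_zero:
  fixes e :: "nat \<Rightarrow> real"
  assumes "\<forall>n. 0 \<le> e n" "\<forall>n. e (Suc n) \<le> L * e n" "0 \<le> L" "L < 1"
  shows "e \<longlonglongrightarrow> 0"
proof -
  have b: "e n \<le> L^n * e 0" for n
  proof (induction n)
    case 0 then show ?case by simp
  next
    case (Suc n)
    have "e (Suc n) \<le> L * e n" using assms(2) by blast
    also have "\<dots> \<le> L * (L^n * e 0)" using Suc assms(3) by (intro mult_left_mono) auto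
    finally show ?case by simp
  qed
  have "(\<lambda>n. L^n) \<longlonglongrightarrow> 0" using assms(3,4) by (intro LIMSEQ_power_zero) simp
  then have l: "(\<lambda>n. L^n * e 0) \<longlonglongrightarrow> 0 * e 0" by (rule tendsto_mult_right)
  have ev1: "eventually (\<lambda>n. 0 \<le> e n) sequentially" using assms(1) by simp
  have ev2: "eventually (\<lambda>n. e n \<le> L^n * e 0) sequentially" using b by simp
  show ?thesis using tendsto_sandwich[OF ev1 ev2 tendsto_const] l by simp
qed


lemma vscale_single: "vscale a [(\<rho>, r)] = [(\<rho>, a * r)]"
  by (simp add: vscale_def)

lemma cineq:
  assumes contr: "ciric_contraction F T a1 a2 a3 a4" and rF: "\<rho> \<in> F" and pm: "pseudometric \<rho>"
    and xy: "x \<le> y"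
  shows "\<rho> (T x) (T y) \<le> a1 x y * \<rho> x y + a2 x y * \<rho> x (T x) + a3 x y * \<rho> y (T y)
           + a4 x y * (\<rho> x (T y) + \<rho> y (T x))"
proof -
  have pos: "0 < a1 x y" "0 < a2 x y" "0 < a3 x y" "0 < a4 x y"
    using contr unfolding ciric_contraction_def by auto
  have C: "\<forall>x y V1 V2 V3 V4 V5. x \<le> y \<longrightarrow>
        Vrep F V1 \<longrightarrow> Vrep F V2 \<longrightarrow> Vrep F V3 \<longrightarrow> Vrep F V4 \<longrightarrow> Vrep F V5 \<longrightarrow>
        (x, y) \<in> vset V1 \<longrightarrow> (x, T x) \<in> vset V2 \<longrightarrow> (y, T y) \<in> vset V3 \<longrightarrow>
        (x, T y) \<in> vset V4 \<longrightarrow> (y, T x) \<in> vset V5 \<longrightarrow>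
        (T x, T y) \<in> vset (vscale (a1 x y) V1) \<circ>\<^sub>U vset (vscale (a2 x y) V2) \<circ>\<^sub>U
                      vset (vscale (a3 x y) V3) \<circ>\<^sub>U vset (vscale (a4 x y) V4) \<circ>\<^sub>U
                      vset (vscale (a4 x y) V5)"
    using contr unfolding ciric_contraction_def by blast
  have nn: "\<forall>a b. 0 \<le> \<rho> a b" and tri: "\<forall>a b c. \<rho> a c \<le> \<rho> a b + \<rho> b c"
    using pm by (auto simp: pseudometric_def)
  define S where "S = a1 x y + a2 x y + a3 x y + 2 * a4 x y"
  have Spos: "0 < S" using pos by (simp add: S_def)
  define R where "R = a1 x y * \<rho> x y + a2 x y * \<rho> x (T x) + a3 x y * \<rho> y (T y)
           + a4 x y * (\<rho> x (T y) + \<rho> y (T x))"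
  have H: "\<rho> (T x) (T y) < R + \<epsilon> * S" if ep: "0 < \<epsilon>" for \<epsilon>
  proof -
    have vr: "Vrep F [(\<rho>, \<rho> a b + \<epsilon>)]" for a b
      using Vrep_single[OF rF, of "\<rho> a b + \<epsilon>"] nn ep by (metis add_nonneg_pos)
    have m: "(a, b) \<in> vset [(\<rho>, \<rho> a b + \<epsilon>)]" for a b using ep by (simp add: vset_single)
    have "(T x, T y) \<in> vset [(\<rho>, a1 x y * (\<rho> x y + \<epsilon>))] \<circ>\<^sub>U vset [(\<rho>, a2 x y * (\<rho> x (T x) + \<epsilon>))] \<circ>\<^sub>U
                      vset [(\<rho>, a3 x y * (\<rho> y (T y) + \<epsilon>))] \<circ>\<^sub>U vset [(\<rho>, a4 x y * (\<rho> x (T y) + \<epsilon>))] \<circ>\<^sub>U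
                      vset [(\<rho>, a4 x y * (\<rho> y (T x) + \<epsilon>))]"
      using C[rule_format, OF xy vr vr vr vr vr m m m m m] by (simp add: vscale_single)
    then obtain z1 z2 z3 z4 where
      h: "\<rho> (T x) z4 < a4 x y * (\<rho> y (T x) + \<epsilon>)" "\<rho> z4 z3 < a4 x y * (\<rho> x (T y) + \<epsilon>)"
         "\<rho> z3 z2 < a3 x y * (\<rho> y (T y) + \<epsilon>)" "\<rho> z2 z1 < a2 x y * (\<rho> x (T x) + \<epsilon>)"
         "\<rho> z1 (T y) < a1 x y * (\<rho> x y + \<epsilon>)"
      unfolding ucomp_def vset_single by blast
    have "\<rho> (T x) (T y) \<le> \<rho> (T x) z4 + \<rho> z4 z3 + \<rho> z3 z2 + \<rho> z2 z1 + \<rho> z1 (T y)"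
      using tri by (smt (verit))
    also have "\<dots> < R + \<epsilon> * S" using h unfolding R_def S_def by (simp add: algebra_simps)
    finally show ?thesis .
  qed
  show ?thesis
  proof (rule ccontr)
    assume "\<not> ?thesis"
    then have g: "R < \<rho> (T x) (T y)" unfolding R_def by simp
    have "\<rho> (T x) (T y) < R + ((\<rho> (T x) (T y) - R) / S) * S"
      using H[of "(\<rho> (T x) (T y) - R) / S"] g Spos by simp
    then show False using Spos by simp
  qed
qed


lemma geo_bound:
  fixes e :: "nat \<Rightarrow> real"
  assumes "\<forall>n. e (Suc n) \<le> L * e n" "0 \<le> L"
  shows "e n \<le> L^n * e 0"
proof (induction n)
  case 0 then show ?case by simp
next
  case (Suc n)
  have "e (Suc n) \<le> L * e n" using assms(1) by blast
  also have "\<dots> \<le> L * (L^n * e 0)" using Suc assms(2) by (intro mult_left_mono) auto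
  finally show ?case by simp
qed

lemma coeff_facts:
  assumes contr: "ciric_contraction F T a1 a2 a3 a4"
    and Lb: "\<forall>x y. a1 x y + a2 x y + a3 x y + 2 * a4 x y \<le> L"
  shows "0 < a1 x y" "0 < a2 x y" "0 < a3 x y" "0 < a4 x y"
    "a1 x y + a2 x y + a3 x y + 2 * a4 x y \<le> L" "0 \<le> L"
proof -
  show p: "0 < a1 x y" "0 < a2 x y" "0 < a3 x y" "0 < a4 x y"
    using contr unfolding ciric_contraction_def by auto
  show "a1 x y + a2 x y + a3 x y + 2 * a4 x y \<le> L" using Lb by blast
  then show "0 \<le> L" using p by linarith
qed

lemma exist:
  fixes F :: "('a::order \<Rightarrow> 'a \<Rightarrow> real) set"
  assumes F_pm: "\<forall>\<rho>\<in>F. pseudometric \<rho>"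
    and complete: "seq_complete F"
    and sep: "separated F"
    and order_reg: "\<forall>s x. (\<forall>n. s n \<le> s (Suc n)) \<and> uconv F s x \<longrightarrow>
                       (\<exists>\<phi>::nat \<Rightarrow> nat. strict_mono \<phi> \<and> (\<forall>k. s (\<phi> k) \<le> x))"
    and contr: "ciric_contraction F T a1 a2 a3 a4"
    and Lb: "\<forall>x y. a1 x y + a2 x y + a3 x y + 2 * a4 x y \<le> L"
    and L1: "L < 1"
    and x0: "x0 \<le> T x0"
  shows "\<exists>x. T x = x"
proof -
  note cf = coeff_facts[OF contr Lb]
  have L0: "0 \<le> L" using cf(6) .
  have monoT: "\<And>x y. x \<le> y \<Longrightarrow> T x \<le> T y" using contr unfolding ciric_contraction_def by blast
  define s where "s n = (T ^^ n) x0" for n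
  have sS: "s (Suc n) = T (s n)" for n by (simp add: s_def)
  have smono: "s n \<le> s (Suc n)" for n
  proof (induction n)
    case 0 then show ?case using x0 by (simp add: s_def)
  next
    case (Suc n) then show ?case unfolding sS[of "Suc n"] sS[of n] by (rule monoT)
  qed
  have cauchy_bound: "\<exists>C. \<forall>m n. m \<le> n \<longrightarrow> \<rho> (s m) (s n) \<le> L^m * C" if rF: "\<rho> \<in> F" for \<rho>
  proof -
    have pm: "pseudometric \<rho>" using F_pm rF by blast
    have nn: "\<forall>a b. 0 \<le> \<rho> a b" and tri: "\<forall>a b c. \<rho> a c \<le> \<rho> a b + \<rho> b c"
      and z: "\<forall>a. \<rho> a a = 0"
      using pm by (auto simp: pseudometric_def)
    define d where "d n = \<rho> (s n) (s (Suc n))" for n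
    have dstep: "d (Suc n) \<le> L * d n" for n
    proof -
      let ?x = "s n" and ?y = "s (Suc n)"
      have ci: "\<rho> (T ?x) (T ?y) \<le> a1 ?x ?y * \<rho> ?x ?y + a2 ?x ?y * \<rho> ?x (T ?x) + a3 ?x ?y * \<rho> ?y (T ?y)
           + a4 ?x ?y * (\<rho> ?x (T ?y) + \<rho> ?y (T ?x))"
        by (rule cineq[OF contr rF pm smono])
      have e1: "\<rho> ?x (T ?y) \<le> d n + d (Suc n)" using tri unfolding d_def sS by blast
      have e2: "a4 ?x ?y * \<rho> ?x (T ?y) \<le> a4 ?x ?y * (d n + d (Suc n))"
        by (intro mult_left_mono[OF e1] less_imp_le[OF cf(4)])
      have "d (Suc n) \<le> (a1 ?x ?y + a2 ?x ?y + a4 ?x ?y) * d n + (a3 ?x ?y + a4 ?x ?y) * d (Suc n)"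
        using ci e2 z unfolding d_def sS by (simp add: algebra_simps)
      moreover note c = cf(1-5)[of ?x ?y]
      moreover have "L * (a3 ?x ?y + a4 ?x ?y) \<le> a3 ?x ?y + a4 ?x ?y"
        using c L0 L1 by (intro mult_left_le_one_le) auto
      ultimately have key: "a1 ?x ?y + a2 ?x ?y + a4 ?x ?y + L * (a3 ?x ?y + a4 ?x ?y) \<le> L"
        by linarith
      have "0 \<le> d n" using nn by (simp add: d_def)
      moreover have "a3 ?x ?y + a4 ?x ?y < 1" using c L1 by linarith
      moreover have "0 \<le> a3 ?x ?y + a4 ?x ?y" using c by linarith
      ultimately show ?thesis using geo_step[OF _ _ _ L0 key] \<open>d (Suc n) \<le> _\<close> by blast
    qed
    have dn: "d n \<le> L^n * d 0" for n by (rule geo_bound) (use dstep L0 in auto)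
    have kb: "\<rho> (s m) (s (m + k)) \<le> L^m * d 0 * (1 - L^k) / (1 - L)" for m k
    proof (induction k)
      case 0 then show ?case using z by simp
    next
      case (Suc k)
      have "\<rho> (s m) (s (m + Suc k)) \<le> \<rho> (s m) (s (m + k)) + d (m + k)"
        using tri unfolding d_def by simp
      also have "\<dots> \<le> L^m * d 0 * (1 - L^k) / (1 - L) + L^(m+k) * d 0"
        using Suc dn[of "m+k"] by linarith
      also have "\<dots> = L^m * d 0 * (1 - L^Suc k) / (1 - L)"
        using L1 by (simp add: field_simps power_add)
      finally show ?case .
    qed
    show ?thesis
    proof (intro exI[of _ "d 0 / (1 - L)"] allI impI)
      fix m n :: nat assume "m \<le> n"
      then obtain k where k: "n = m + k" using le_Suc_ex by blast
      have "L^m * d 0 * (1 - L^k) / (1 - L) \<le> L^m * d 0 / (1 - L)"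
        using L0 L1 nn unfolding d_def
        by (intro divide_right_mono mult_left_le) (auto simp: zero_le_mult_iff)
      then show "\<rho> (s m) (s n) \<le> L ^ m * (d 0 / (1 - L))" using kb[of m k] k by simp
    qed
  qed
  have "ucauchy F s"
  proof (rule ucauchy_I[OF F_pm], intro ballI allI impI)
    fix \<rho> and e :: real assume rF: "\<rho> \<in> F" and e: "0 < e"
    obtain C where C: "\<forall>m n. m \<le> n \<longrightarrow> \<rho> (s m) (s n) \<le> L^m * C" using cauchy_bound[OF rF] by blast
    have "(\<lambda>n. L^n) \<longlonglongrightarrow> 0" using L0 L1 by (intro LIMSEQ_power_zero) simp
    then have "(\<lambda>n. L^n * C) \<longlonglongrightarrow> 0 * C" by (rule tendsto_mult_right)
    then have "eventually (\<lambda>n. L^n * C < e) sequentially" using e by (simp add: order_tendstoD)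
    then obtain N where N: "\<forall>m\<ge>N. L^m * C < e" by (auto simp: eventually_sequentially)
    show "\<exists>N. \<forall>m\<ge>N. \<forall>n\<ge>m. \<rho> (s m) (s n) < e"
      using N C by (meson order_le_less_trans)
  qed
  then obtain xs where xs: "uconv F s xs" using complete by (auto simp: seq_complete_def)
  then obtain \<phi> :: "nat \<Rightarrow> nat" where phi: "strict_mono \<phi>" "\<forall>k. s (\<phi> k) \<le> xs"
    using order_reg smono by blast
  have D0: "\<rho> xs (T xs) = 0" if rF: "\<rho> \<in> F" for \<rho>
  proof -
    have pm: "pseudometric \<rho>" using F_pm rF by blast
    have nn: "\<forall>a b. 0 \<le> \<rho> a b" and tri: "\<forall>a b c. \<rho> a c \<le> \<rho> a b + \<rho> b c"
      and sym: "\<forall>a b. \<rho> a b = \<rho> b a"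
      using pm by (auto simp: pseudometric_def)
    define D where "D = \<rho> xs (T xs)"
    define u where "u k = \<rho> (s (\<phi> k)) xs" for k
    define v where "v k = \<rho> (s (Suc (\<phi> k))) xs" for k
    have lim: "(\<lambda>n. \<rho> (s n) xs) \<longlonglongrightarrow> 0" by (rule uconv_D[OF xs rF pm])
    have ul: "u \<longlonglongrightarrow> 0" using LIMSEQ_subseq_LIMSEQ[OF lim phi(1)] by (simp add: u_def[abs_def] o_def)
    have sm2: "strict_mono (Suc \<circ> \<phi>)" using phi(1) by (simp add: strict_mono_def)
    have vl: "v \<longlonglongrightarrow> 0" using LIMSEQ_subseq_LIMSEQ[OF lim sm2] by (simp add: v_def[abs_def] o_def)
    have gl: "(\<lambda>k. 3 * (u k + v k)) \<longlonglongrightarrow> 0" using tendsto_add[OF ul vl] tendsto_mult_left[of _ 0 _ 3] by force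
    have bnd: "(1 - L) * D \<le> 3 * (u k + v k)" for k
    proof -
      let ?x = "s (\<phi> k)" and ?y = xs
      have ci: "\<rho> (T ?x) (T ?y) \<le> a1 ?x ?y * \<rho> ?x ?y + a2 ?x ?y * \<rho> ?x (T ?x) + a3 ?x ?y * \<rho> ?y (T ?y)
           + a4 ?x ?y * (\<rho> ?x (T ?y) + \<rho> ?y (T ?x))"
        by (rule cineq[OF contr rF pm phi(2)[rule_format]])
      have f1: "\<rho> ?x (T ?x) \<le> u k + v k" using tri sym unfolding u_def v_def sS by metis
      have f2: "\<rho> ?x (T ?y) \<le> u k + D" using tri unfolding u_def D_def by blast
      have f3: "\<rho> ?y (T ?x) = v k" using sym unfolding v_def sS by metis
      have f4: "D \<le> v k + \<rho> (T ?x) (T ?y)" using tri sym unfolding v_def sS D_def by metis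
      have u0: "0 \<le> u k" "0 \<le> v k" "0 \<le> D" using nn unfolding u_def v_def D_def by auto
      note c = cf(1-5)[of ?x ?y]
      have al: "a1 ?x ?y \<le> 1" "a2 ?x ?y \<le> 1" "a4 ?x ?y \<le> 1" "a3 ?x ?y + a4 ?x ?y \<le> L"
        using c L1 by linarith+
      have g1: "a1 ?x ?y * \<rho> ?x ?y \<le> u k" using u0 c al unfolding u_def
        by (intro mult_left_le_one_le) auto
      have g2a: "a2 ?x ?y * \<rho> ?x (T ?x) \<le> \<rho> ?x (T ?x)" using nn c al
        by (intro mult_left_le_one_le) auto
      have g2: "a2 ?x ?y * \<rho> ?x (T ?x) \<le> u k + v k" using g2a f1 by linarith
      have g3a: "a4 ?x ?y * (\<rho> ?x (T ?y) + \<rho> ?y (T ?x)) \<le> a4 ?x ?y * (u k + D + v k)"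
        using f2 f3 c by (intro mult_left_mono) auto
      have g3: "a4 ?x ?y * (\<rho> ?x (T ?y) + \<rho> ?y (T ?x)) \<le> a4 ?x ?y * (u k + v k) + a4 ?x ?y * D"
        using g3a by (simp add: algebra_simps)
      have g4: "a4 ?x ?y * (u k + v k) \<le> u k + v k" using c u0 al by (intro mult_left_le_one_le) auto
      have g5: "(a3 ?x ?y + a4 ?x ?y) * D \<le> L * D" using al u0
        by (intro mult_right_mono) auto
      show ?thesis using ci f4 g1 g2 g3 g4 g5 unfolding D_def[symmetric] by (simp add: algebra_simps)
    qed
    have "(1 - L) * D \<le> 0"
      by (rule LIMSEQ_le_const[OF gl]) (use bnd in auto)
    then have "D \<le> 0" using L1 by (simp add: mult_le_0_iff)
    then show ?thesis using nn unfolding D_def by (meson antisym)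
  qed
  have "xs = T xs" by (rule sep_eq[OF sep]) (use D0 in blast)
  then show ?thesis by metis
qed


lemma conv_below:
  fixes F :: "('a::order \<Rightarrow> 'a \<Rightarrow> real) set"
  assumes contr: "ciric_contraction F T a1 a2 a3 a4" and rF: "\<rho> \<in> F" and pm: "pseudometric \<rho>"
    and Lb: "\<forall>x y. a1 x y + a2 x y + a3 x y + 2 * a4 x y \<le> L"
    and L1: "L < 1" and a23: "\<forall>x y. a2 x y = a3 x y" and Tp: "T p = p" and zp: "z \<le> p"
  shows "(\<lambda>n. \<rho> ((T ^^ n) z) p) \<longlonglongrightarrow> 0"
proof -
  note cf = coeff_facts[OF contr Lb]
  have L0: "0 \<le> L" using cf(6) .
  have monoT: "\<And>x y. x \<le> y \<Longrightarrow> T x \<le> T y" using contr unfolding ciric_contraction_def by blast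
  have nn: "\<forall>a b. 0 \<le> \<rho> a b" and tri: "\<forall>a b c. \<rho> a c \<le> \<rho> a b + \<rho> b c"
    and sym: "\<forall>a b. \<rho> a b = \<rho> b a" and z: "\<forall>a. \<rho> a a = 0"
    using pm by (auto simp: pseudometric_def)
  define s where "s n = (T ^^ n) z" for n
  have sS: "s (Suc n) = T (s n)" for n by (simp add: s_def)
  have sle: "s n \<le> p" for n
  proof (induction n)
    case 0 then show ?case using zp by (simp add: s_def)
  next
    case (Suc n) then show ?case unfolding sS using monoT[OF Suc] Tp by simp
  qed
  define e where "e n = \<rho> (s n) p" for n
  have step: "e (Suc n) \<le> L * e n" for n
  proof -
    let ?x = "s n" and ?y = p
    have ci: "\<rho> (T ?x) (T ?y) \<le> a1 ?x ?y * \<rho> ?x ?y + a2 ?x ?y * \<rho> ?x (T ?x) + a3 ?x ?y * \<rho> ?y (T ?y)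
         + a4 ?x ?y * (\<rho> ?x (T ?y) + \<rho> ?y (T ?x))"
      by (rule cineq[OF contr rF pm sle])
    have f1: "\<rho> ?x (T ?x) \<le> e n + e (Suc n)" using tri sym unfolding e_def sS by metis
    have f3: "\<rho> ?y (T ?x) = e (Suc n)" using sym unfolding e_def sS by metis
    note c = cf(1-5)[of ?x ?y]
    have e23: "a2 ?x ?y = a3 ?x ?y" using a23 by blast
    have g2: "a2 ?x ?y * \<rho> ?x (T ?x) \<le> a2 ?x ?y * (e n + e (Suc n))"
      using f1 c by (intro mult_left_mono) auto
    have ineq: "e (Suc n) \<le> (a1 ?x ?y + a2 ?x ?y + a4 ?x ?y) * e n + (a2 ?x ?y + a4 ?x ?y) * e (Suc n)"
      using ci g2 f3 z Tp unfolding e_def sS by (simp add: algebra_simps)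
    have "L * (a2 ?x ?y + a4 ?x ?y) \<le> a2 ?x ?y + a4 ?x ?y"
      using c L0 L1 by (intro mult_left_le_one_le) auto
    then have key: "a1 ?x ?y + a2 ?x ?y + a4 ?x ?y + L * (a2 ?x ?y + a4 ?x ?y) \<le> L"
      using c e23 by linarith
    have "0 \<le> e n" using nn by (simp add: e_def)
    moreover have "a2 ?x ?y + a4 ?x ?y < 1" using c L1 e23 by linarith
    moreover have "0 \<le> a2 ?x ?y + a4 ?x ?y" using c by linarith
    ultimately show ?thesis using geo_step[OF _ _ _ L0 key] ineq by blast
  qed
  have "e \<longlonglongrightarrow> 0" by (rule geo_zero) (use step nn L0 L1 in \<open>auto simp: e_def\<close>)
  then show ?thesis by (simp add: e_def[abs_def] s_def)
qed


lemma conv_above: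
  fixes F :: "('a::order \<Rightarrow> 'a \<Rightarrow> real) set"
  assumes contr: "ciric_contraction F T a1 a2 a3 a4" and rF: "\<rho> \<in> F" and pm: "pseudometric \<rho>"
    and Lb: "\<forall>x y. a1 x y + a2 x y + a3 x y + 2 * a4 x y \<le> L"
    and L1: "L < 1" and a23: "\<forall>x y. a2 x y = a3 x y" and Tp: "T p = p" and zp: "p \<le> z"
  shows "(\<lambda>n. \<rho> p ((T ^^ n) z)) \<longlonglongrightarrow> 0"
proof -
  note cf = coeff_facts[OF contr Lb]
  have L0: "0 \<le> L" using cf(6) .
  have monoT: "\<And>x y. x \<le> y \<Longrightarrow> T x \<le> T y" using contr unfolding ciric_contraction_def by blast
  have nn: "\<forall>a b. 0 \<le> \<rho> a b" and tri: "\<forall>a b c. \<rho> a c \<le> \<rho> a b + \<rho> b c"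
    and sym: "\<forall>a b. \<rho> a b = \<rho> b a" and z: "\<forall>a. \<rho> a a = 0"
    using pm by (auto simp: pseudometric_def)
  define s where "s n = (T ^^ n) z" for n
  have sS: "s (Suc n) = T (s n)" for n by (simp add: s_def)
  have sle: "p \<le> s n" for n
  proof (induction n)
    case 0 then show ?case using zp by (simp add: s_def)
  next
    case (Suc n) then show ?case unfolding sS using monoT[OF Suc] Tp by simp
  qed
  define e where "e n = \<rho> p (s n)" for n
  have step: "e (Suc n) \<le> L * e n" for n
  proof -
    let ?x = p and ?y = "s n"
    have ci: "\<rho> (T ?x) (T ?y) \<le> a1 ?x ?y * \<rho> ?x ?y + a2 ?x ?y * \<rho> ?x (T ?x) + a3 ?x ?y * \<rho> ?y (T ?y)
         + a4 ?x ?y * (\<rho> ?x (T ?y) + \<rho> ?y (T ?x))"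
      by (rule cineq[OF contr rF pm sle])
    have f1: "\<rho> ?y (T ?y) \<le> e n + e (Suc n)" using tri sym unfolding e_def sS by metis
    have f3: "\<rho> ?y (T ?x) = e n" using sym Tp unfolding e_def by metis
    note c = cf(1-5)[of ?x ?y]
    have e23: "a2 ?x ?y = a3 ?x ?y" using a23 by blast
    have g2: "a3 ?x ?y * \<rho> ?y (T ?y) \<le> a3 ?x ?y * (e n + e (Suc n))"
      using f1 c by (intro mult_left_mono) auto
    have ineq: "e (Suc n) \<le> (a1 ?x ?y + a3 ?x ?y + a4 ?x ?y) * e n + (a3 ?x ?y + a4 ?x ?y) * e (Suc n)"
      using ci g2 f3 z Tp unfolding e_def sS by (simp add: algebra_simps)
    have "L * (a3 ?x ?y + a4 ?x ?y) \<le> a3 ?x ?y + a4 ?x ?y"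
      using c L0 L1 by (intro mult_left_le_one_le) auto
    then have key: "a1 ?x ?y + a3 ?x ?y + a4 ?x ?y + L * (a3 ?x ?y + a4 ?x ?y) \<le> L"
      using c e23 by linarith
    have "0 \<le> e n" using nn by (simp add: e_def)
    moreover have "a3 ?x ?y + a4 ?x ?y < 1" using c L1 e23 by linarith
    moreover have "0 \<le> a3 ?x ?y + a4 ?x ?y" using c by linarith
    ultimately show ?thesis using geo_step[OF _ _ _ L0 key] ineq by blast
  qed
  have "e \<longlonglongrightarrow> 0" by (rule geo_zero) (use step nn L0 L1 in \<open>auto simp: e_def\<close>)
  then show ?thesis by (simp add: e_def[abs_def] s_def)
qed

theorem corollary2:
  fixes F :: "('a::order \<Rightarrow> 'a \<Rightarrow> real) set"
    and T :: "'a \<Rightarrow> 'a"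
    and a1 a2 a3 a4 :: "'a \<Rightarrow> 'a \<Rightarrow> real"
  assumes F_ne: "F \<noteq> {}"
    and F_pm: "\<forall>\<rho>\<in>F. pseudometric \<rho>"
    and complete: "seq_complete F"
    and sep: "separated F"
    and order_reg: "\<forall>s x. (\<forall>n. s n \<le> s (Suc n)) \<and> uconv F s x \<longrightarrow>
                       (\<exists>\<phi>::nat \<Rightarrow> nat. strict_mono \<phi> \<and> (\<forall>k. s (\<phi> k) \<le> x))"
    and contr: "ciric_contraction F T a1 a2 a3 a4"
  shows "((\<exists>x. T x = x) \<longleftrightarrow> (\<exists>x0. x0 \<le> T x0)) \<and>
         ((\<forall>x y. a2 x y = a3 x y) \<and>
          (\<forall>x y::'a. (\<exists>z. z \<le> x \<and> z \<le> y) \<or> (\<exists>z. x \<le> z \<and> y \<le> z)) \<and>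
          (\<exists>x0. x0 \<le> T x0) \<longrightarrow> (\<exists>!x. T x = x))"
proof -
  define L where "L = (SUP (x, y). a1 x y + a2 x y + a3 x y + 2 * a4 x y)"
  have bdd: "bdd_above (range (\<lambda>(x, y). a1 x y + a2 x y + a3 x y + 2 * a4 x y))"
    and L1: "L < 1" using contr unfolding ciric_contraction_def L_def by auto
  have Lb: "\<forall>x y. a1 x y + a2 x y + a3 x y + 2 * a4 x y \<le> L"
  proof (intro allI)
    fix x y
    have "(\<lambda>(x, y). a1 x y + a2 x y + a3 x y + 2 * a4 x y) (x, y) \<le> L"
      unfolding L_def by (rule cSUP_upper[OF UNIV_I bdd])
    then show "a1 x y + a2 x y + a3 x y + 2 * a4 x y \<le> L" by simp
  qed
  have ex: "\<exists>x. T x = x" if "x0 \<le> T x0" for x0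
    by (rule exist[OF F_pm complete sep order_reg contr Lb L1 that])
  have part1: "(\<exists>x. T x = x) \<longleftrightarrow> (\<exists>x0. x0 \<le> T x0)"
    using ex by (metis order_refl)
  have part2: "\<exists>!x. T x = x" if a23: "\<forall>x y. a2 x y = a3 x y"
    and bnd: "\<forall>x y::'a. (\<exists>z. z \<le> x \<and> z \<le> y) \<or> (\<exists>z. x \<le> z \<and> y \<le> z)"
    and x0: "\<exists>x0. x0 \<le> T x0"
  proof -
    obtain p where p: "T p = p" using ex x0 by blast
    have uniq: "q = p" if q: "T q = q" for q
    proof (rule sep_eq[OF sep], intro ballI)
      fix \<rho> assume rF: "\<rho> \<in> F"
      have pm: "pseudometric \<rho>" using F_pm rF by blast
      have nn: "\<forall>a b. 0 \<le> \<rho> a b" and tri: "\<forall>a b c. \<rho> a c \<le> \<rho> a b + \<rho> b c"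
        and sym: "\<forall>a b. \<rho> a b = \<rho> b a"
        using pm by (auto simp: pseudometric_def)
      have "\<rho> q p \<le> 0"
      proof (cases "\<exists>z. z \<le> q \<and> z \<le> p")
        case True
        then obtain z where z: "z \<le> q" "z \<le> p" by blast
        have l: "(\<lambda>n. \<rho> ((T ^^ n) z) q + \<rho> ((T ^^ n) z) p) \<longlonglongrightarrow> 0 + 0"
          by (intro tendsto_add conv_below[OF contr rF pm Lb L1 a23] q p z)
        have "\<rho> q p \<le> 0 + 0"
        proof (rule LIMSEQ_le_const[OF l], intro exI allI impI)
          fix n show "\<rho> q p \<le> \<rho> ((T ^^ n) z) q + \<rho> ((T ^^ n) z) p"
            using tri sym by metis
        qed
        then show ?thesis by simp
      next
        case False
        then obtain z where z: "q \<le> z" "p \<le> z" using bnd by blast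
        have l: "(\<lambda>n. \<rho> q ((T ^^ n) z) + \<rho> p ((T ^^ n) z)) \<longlonglongrightarrow> 0 + 0"
          by (intro tendsto_add conv_above[OF contr rF pm Lb L1 a23] q p z)
        have "\<rho> q p \<le> 0 + 0"
        proof (rule LIMSEQ_le_const[OF l], intro exI allI impI)
          fix n show "\<rho> q p \<le> \<rho> q ((T ^^ n) z) + \<rho> p ((T ^^ n) z)"
            using tri sym by metis
        qed
        then show ?thesis by simp
      qed
      then show "\<rho> q p = 0" using nn by (meson antisym)
    qed
    show ?thesis using p uniq by blast
  qed
  show ?thesis using part1 part2 by blast
qed

end
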